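(* Let $\phi,\alpha,\beta$ be arbitrary formulas (not necessarily sentences). Then $$\{\phi\vee(\alpha\to\beta^n): n\in\mathbb N\}\vDash\phi\vee(\alpha\to(\alpha\&\beta)).$$
   Context: Formulas are built from a countable predicate language (variables, constants, predicate symbols) with connectives $\to,\&$, constant $0$ and quantifiers $\forall,\exists$; abbreviations: $\phi\wedge\psi$ is $\phi\&(\phi\to\psi)$, $\phi\vee\psi$ is $((\phi\to\psi)\to\psi)\wedge((\psi\to\phi)\to\phi)$, $1$ is $0\to0$, $\beta^n$ is the $n$-fold $\&$-power of $\beta$. A continuous t-norm is a continuous binary operation $\cdot$ on $[0,1]$ that is commutative, associative, monotone in each argument and has $1$ as unit; it is regarded as the algebra $([0,1],\cdot,\to,\min,\max,0,1)$ where $\to$ is its residuum ($x\cdot y\le z$ iff $x\le y\to z$). For such a $\mathbf B$, a $\mathbf B$-structure $\mathbf M$ consists of a nonempty set $M$, an element $c^{\mathbf M}\in M$ for each constant $c$, and a function $P^{\mathbf M}:M^n\to[0,1]$ for each $n$-ary predicate $P$. For a valuation $v$ (a map from variables to $M$), $\|\phi\|^{\mathbf M,v}$ is defined inductively: $\|P(t_1,\dots,t_n)\|^{\mathbf M,v}=P^{\mathbf M}(t_1^{\mathbf M,v},\dots,t_n^{\mathbf M,v})$ (with $c^{\mathbf M,v}=c^{\mathbf M}$, $x^{\mathbf M,v}=v(x)$), $\|0\|=0$, $\&$ and $\to$ are interpreted by $\cdot$ and its residuum, $\|\forall x\psi\|^{\mathbf M,v}=\inf\{\|\psi\|^{\mathbf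 M,w}:w\equiv_x v\}$ and $\|\exists x\psi\|^{\mathbf M,v}=\sup\{\|\psi\|^{\mathbf M,w}:w\equiv_x v\}$, where $w\equiv_x v$ means $w$ agrees with $v$ except possibly at $x$. $\mathbf M$ is a model of $\phi$ if $\|\phi\|^{\mathbf M,v}=1$ for every valuation $v$, and a model of a set $\Gamma$ if it is a model of each member. $\Gamma\vDash\phi$ means: for every continuous t-norm $\mathbf B$ and every $\mathbf B$-structure $\mathbf M$, if $\mathbf M$ is a model of $\Gamma$ then $\mathbf M$ is a model of $\phi$. *)

theory Defs
  imports Complex_Main
begin

text \<open>A predicate name applied to a list of terms; its arity is the length of the list
  (so predicate symbols are the pairs (name, arity)).\<close>

datatype fterm = Var nat | Const nat

datatype form =
    Atom nat "fterm list"
  | Imp form form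
  | SConj form form
  | Bot
  | All nat form
  | Ex nat form

definition Wedge :: "form \<Rightarrow> form \<Rightarrow> form" where
  "Wedge \<phi> \<psi> = SConj \<phi> (Imp \<phi> \<psi>)"

definition Vee :: "form \<Rightarrow> form \<Rightarrow> form" where
  "Vee \<phi> \<psi> = Wedge (Imp (Imp \<phi> \<psi>) \<psi>) (Imp (Imp \<psi> \<phi>) \<phi>)"

definition Top :: form where
  "Top = Imp Bot Bot"

fun fpow :: "form \<Rightarrow> nat \<Rightarrow> form" where
  "fpow \<beta> 0 = Top"
| "fpow \<beta> (Suc 0) = \<beta>"
| "fpow \<beta> (Suc (Suc n)) = SConj \<beta> (fpow \<beta> (Suc n))"

definition cont_tnorm :: "(real \<Rightarrow> real \<Rightarrow> real) \<Rightarrow> bool" where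
  "cont_tnorm T \<longleftrightarrow>
     (\<forall>x\<in>{0..1}. \<forall>y\<in>{0..1}. T x y \<in> {0..1}) \<and>
     continuous_on ({0..1} \<times> {0..1}) (\<lambda>(x,y). T x y) \<and>
     (\<forall>x\<in>{0..1}. \<forall>y\<in>{0..1}. T x y = T y x) \<and>
     (\<forall>x\<in>{0..1}. \<forall>y\<in>{0..1}. \<forall>z\<in>{0..1}. T (T x y) z = T x (T y z)) \<and>
     (\<forall>x\<in>{0..1}. \<forall>x'\<in>{0..1}. \<forall>y\<in>{0..1}. x \<le> x' \<longrightarrow> T x y \<le> T x' y) \<and>
     (\<forall>x\<in>{0..1}. T x 1 = x)"

definition residuum :: "(real \<Rightarrow> real \<Rightarrow> real) \<Rightarrow> real \<Rightarrow> real \<Rightarrow> real" where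
  "residuum T x y = Sup {z \<in> {0..1}. T z x \<le> y}"

record 'm fstruct =
  mdom :: "'m set"
  cint :: "nat \<Rightarrow> 'm"
  pint :: "nat \<Rightarrow> 'm list \<Rightarrow> real"

definition is_structure :: "'m fstruct \<Rightarrow> bool" where
  "is_structure M \<longleftrightarrow> mdom M \<noteq> {} \<and> (\<forall>c. cint M c \<in> mdom M) \<and>
     (\<forall>p xs. set xs \<subseteq> mdom M \<longrightarrow> pint M p xs \<in> {0..1})"

fun teval :: "'m fstruct \<Rightarrow> (nat \<Rightarrow> 'm) \<Rightarrow> fterm \<Rightarrow> 'm" where
  "teval M v (Var x) = v x"
| "teval M v (Const c) = cint M c"

fun eval :: "(real \<Rightarrow> real \<Rightarrow> real) \<Rightarrow> 'm fstruct \<Rightarrow> (nat \<Rightarrow> 'm) \<Rightarrow> form \<Rightarrow> real" where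
  "eval T M v (Atom p ts) = pint M p (map (teval M v) ts)"
| "eval T M v (Imp \<phi> \<psi>) = residuum T (eval T M v \<phi>) (eval T M v \<psi>)"
| "eval T M v (SConj \<phi> \<psi>) = T (eval T M v \<phi>) (eval T M v \<psi>)"
| "eval T M v Bot = 0"
| "eval T M v (All x \<phi>) = Inf {eval T M (v(x := a)) \<phi> | a. a \<in> mdom M}"
| "eval T M v (Ex x \<phi>) = Sup {eval T M (v(x := a)) \<phi> | a. a \<in> mdom M}"

definition is_model :: "(real \<Rightarrow> real \<Rightarrow> real) \<Rightarrow> 'm fstruct \<Rightarrow> form \<Rightarrow> bool" where
  "is_model T M \<phi> \<longleftrightarrow> (\<forall>v. range v \<subseteq> mdom M \<longrightarrow> eval T M v \<phi> = 1)"

text \<open>Semantic consequence, relative to structures whose domain lives in the type 'm;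
  with 'm left free (universally quantified at theorem level) this is the paper's notion.\<close>
definition entails :: "'m itself \<Rightarrow> form set \<Rightarrow> form \<Rightarrow> bool" where
  "entails (_ :: 'm itself) \<Gamma> \<phi> \<longleftrightarrow>
     (\<forall>T (M :: 'm fstruct). cont_tnorm T \<and> is_structure M \<and> (\<forall>\<gamma>\<in>\<Gamma>. is_model T M \<gamma>)
        \<longrightarrow> is_model T M \<phi>)"

end

theory Submission
  imports Defs "HOL-Analysis.Analysis"
begin

lemma tn_range: "cont_tnorm T \<Longrightarrow> x \<in> {0..1} \<Longrightarrow> y \<in> {0..1} \<Longrightarrow> T x y \<in> {0..1}"
  unfolding cont_tnorm_def by blast
lemma tn_comm: "cont_tnorm T \<Longrightarrow> x \<in> {0..1} \<Longrightarrow> y \<in> {0..1} \<Longrightarrow> T x y = T y x"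
  unfolding cont_tnorm_def by blast
lemma tn_assoc: "cont_tnorm T \<Longrightarrow> x \<in> {0..1} \<Longrightarrow> y \<in> {0..1} \<Longrightarrow> z \<in> {0..1} \<Longrightarrow> T (T x y) z = T x (T y z)"
  unfolding cont_tnorm_def by blast
lemma tn_mono1: "cont_tnorm T \<Longrightarrow> x \<in> {0..1} \<Longrightarrow> x' \<in> {0..1} \<Longrightarrow> y \<in> {0..1} \<Longrightarrow> x \<le> x' \<Longrightarrow> T x y \<le> T x' y"
  unfolding cont_tnorm_def by blast
lemma tn_unit: "cont_tnorm T \<Longrightarrow> x \<in> {0..1} \<Longrightarrow> T x 1 = x"
  unfolding cont_tnorm_def by blast
lemma tn_unit1: "cont_tnorm T \<Longrightarrow> x \<in> {0..1} \<Longrightarrow> T 1 x = x"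
  using tn_comm tn_unit by fastforce
lemma tn_mono2: "cont_tnorm T \<Longrightarrow> x \<in> {0..1} \<Longrightarrow> y' \<in> {0..1} \<Longrightarrow> y \<in> {0..1} \<Longrightarrow> y \<le> y' \<Longrightarrow> T x y \<le> T x y'"
  using tn_comm tn_mono1 by metis
lemma tn_le1: "cont_tnorm T \<Longrightarrow> x \<in> {0..1} \<Longrightarrow> y \<in> {0..1} \<Longrightarrow> T x y \<le> x"
  using tn_mono2[of T x 1 y] tn_unit[of T x] by auto
lemma tn_le2: "cont_tnorm T \<Longrightarrow> x \<in> {0..1} \<Longrightarrow> y \<in> {0..1} \<Longrightarrow> T x y \<le> y"
  using tn_le1 tn_comm by metis
lemma tn_zero: "cont_tnorm T \<Longrightarrow> x \<in> {0..1} \<Longrightarrow> T x 0 = 0"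
  using tn_le2[of T x 0] tn_range[of T x 0] by auto

lemma tn_cont1: "cont_tnorm T \<Longrightarrow> x \<in> {0..1} \<Longrightarrow> continuous_on {0..1} (\<lambda>z. T z x)"
proof -
  assume T: "cont_tnorm T" and x: "x \<in> {0..1}"
  have c: "continuous_on ({0..1} \<times> {0..1}) (\<lambda>(x,y). T x y)" using T unfolding cont_tnorm_def by blast
  have "continuous_on {0..1::real} (\<lambda>z. (z, x))" by (intro continuous_intros)
  moreover have "(\<lambda>z. (z, x)) ` {0..1} \<subseteq> {0..1} \<times> {0..1}" using x by auto
  ultimately have "continuous_on {0..1} ((\<lambda>(x,y). T x y) \<circ> (\<lambda>z. (z, x)))"
    using continuous_on_compose continuous_on_subset c by blast
  then show ?thesis by (simp add: o_def)
qed

lemma tn_cont2: "cont_tnorm T \<Longrightarrow> x \<in> {0..1} \<Longrightarrow> continuous_on {0..1} (\<lambda>z. T x z)"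
proof -
  assume T: "cont_tnorm T" and x: "x \<in> {0..1}"
  have "continuous_on {0..1} (\<lambda>z. T z x)" using tn_cont1[OF T x] .
  moreover have "\<forall>z\<in>{0..1}. T z x = T x z" using tn_comm[OF T] x by auto
  ultimately show ?thesis using continuous_on_cong by (metis (no_types, lifting))
qed

lemma resid: assumes T: "cont_tnorm T" and x: "x \<in> {0..1}" and y: "y \<in> {0..1}" and z: "z \<in> {0..1}"
  shows "T z x \<le> y \<longleftrightarrow> z \<le> residuum T x y"
    and "residuum T x y \<in> {0..1}"
proof -
  define S where "S = {z \<in> {0..1}. T z x \<le> y}"
  have S0: "0 \<in> S" unfolding S_def using tn_zero[OF T x] tn_comm[OF T x] y by auto
  have bdd: "bdd_above S" unfolding S_def by (rule bdd_aboveI[of _ 1]) auto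
  have "S = {0..1} \<inter> (\<lambda>z. T z x) -` {..y}" unfolding S_def by auto
  then have cl: "closed S" using continuous_closed_preimage[OF tn_cont1[OF T x]] by auto
  have SS: "Sup S \<in> S" using closed_contains_Sup[OF _ bdd cl] S0 by auto
  have r: "residuum T x y = Sup S" unfolding residuum_def S_def by simp
  show "residuum T x y \<in> {0..1}" using SS r unfolding S_def by auto
  show "T z x \<le> y \<longleftrightarrow> z \<le> residuum T x y"
  proof
    assume "T z x \<le> y" then have "z \<in> S" using z unfolding S_def by auto
    then show "z \<le> residuum T x y" using r cSup_upper[OF _ bdd] by auto
  next
    assume a: "z \<le> residuum T x y"
    have "T z x \<le> T (Sup S) x" using tn_mono1[OF T z _ x] a r SS unfolding S_def by auto
    also have "\<dots> \<le> y" using SS unfolding S_def by auto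
    finally show "T z x \<le> y" .
  qed
qed

lemma resid_one: assumes T: "cont_tnorm T" and x: "x \<in> {0..1}" and y: "y \<in> {0..1}"
  shows "residuum T x y = 1 \<longleftrightarrow> x \<le> y"
  using resid[OF T x y, of 1] resid(2)[OF T x y, of 0] tn_unit1[OF T x] by auto

lemma resid_top: assumes T: "cont_tnorm T" and y: "y \<in> {0..1}"
  shows "residuum T 1 y = y"
proof -
  have o: "(1::real) \<in> {0..1}" by auto
  have r: "residuum T 1 y \<in> {0..1}" using resid(2)[OF T o y y] .
  have "T (residuum T 1 y) 1 \<le> y" using resid(1)[OF T o y r] by simp
  then have "residuum T 1 y \<le> y" using tn_unit[OF T r] by simp
  moreover have "y \<le> residuum T 1 y" using resid(1)[OF T o y y] tn_unit[OF T y] by simp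
  ultimately show ?thesis by simp
qed

lemma vee_one: assumes T: "cont_tnorm T" and f: "f \<in> {0..1}" and g: "g \<in> {0..1}"
  shows "T (residuum T (residuum T f g) g) (residuum T (residuum T (residuum T f g) g) (residuum T (residuum T g f) f)) = 1
     \<longleftrightarrow> f = 1 \<or> g = 1"
proof -
  have o: "(1::real) \<in> {0..1}" by auto
  have rfg: "residuum T f g \<in> {0..1}" using resid(2)[OF T f g f] .
  have rgf: "residuum T g f \<in> {0..1}" using resid(2)[OF T g f f] .
  define A where "A = residuum T (residuum T f g) g"
  define B where "B = residuum T (residuum T g f) f"
  have A: "A \<in> {0..1}" unfolding A_def using resid(2)[OF T rfg g g] .
  have B: "B \<in> {0..1}" unfolding B_def using resid(2)[OF T rgf f f] .
  have rAB: "residuum T A B \<in> {0..1}" using resid(2)[OF T A B B] .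
  show ?thesis unfolding A_def[symmetric] B_def[symmetric]
  proof
    assume h: "T A (residuum T A B) = 1"
    have A1: "A = 1" using tn_le1[OF T A rAB] h A by auto
    have w1: "residuum T A B = 1" using tn_le2[OF T A rAB] h rAB by auto
    have B1: "B = 1" using resid_one[OF T A B] w1 A1 B by auto
    have c1: "residuum T f g \<le> g" using A1 resid_one[OF T rfg g] unfolding A_def by auto
    have c2: "residuum T g f \<le> f" using B1 resid_one[OF T rgf f] unfolding B_def by auto
    show "f = 1 \<or> g = 1"
    proof (cases "f \<le> g")
      case True then show ?thesis using resid_one[OF T f g] c1 g by auto
    next
      case False then show ?thesis using resid_one[OF T g f] c2 f by auto
    qed
  next
    assume h: "f = 1 \<or> g = 1"
    have "A = 1 \<and> B = 1"
    proof (cases "f = 1")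
      case True
      then show ?thesis unfolding A_def B_def
        using resid_top[OF T g] resid_one[OF T g g] resid_one[OF T g o] resid_one[OF T o o] g by simp
    next
      case False
      then have "g = 1" using h by auto
      then show ?thesis unfolding A_def B_def
        using resid_top[OF T f] resid_one[OF T f f] resid_one[OF T f o] resid_one[OF T o o] f by simp
    qed
    then show "T A (residuum T A B) = 1" using resid_one[OF T o o] tn_unit[OF T o] by simp
  qed
qed

lemma eval_range: assumes T: "cont_tnorm T" and M: "is_structure M"
  shows "range v \<subseteq> mdom M \<Longrightarrow> eval T M v \<phi> \<in> {0..1}"
proof (induction \<phi> arbitrary: v)
  case (Atom p ts)
  have "set (map (teval M v) ts) \<subseteq> mdom M"
  proof
    fix a assume "a \<in> set (map (teval M v) ts)"
    then obtain t where "a = teval M v t" by auto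
    then show "a \<in> mdom M" using Atom M unfolding is_structure_def by (cases t) auto
  qed
  then show ?case using M unfolding is_structure_def by simp
next
  case (Imp \<phi>1 \<phi>2) then show ?case using resid(2)[OF T, of _ _ 0] by simp
next
  case (SConj \<phi>1 \<phi>2) then show ?case using tn_range[OF T] by simp
next
  case Bot then show ?case by simp
next
  case (All x \<phi>)
  define S where "S = {eval T M (v(x := a)) \<phi> | a. a \<in> mdom M}"
  have sub: "\<And>a. a \<in> mdom M \<Longrightarrow> range (v(x:=a)) \<subseteq> mdom M" using All.prems by auto
  have Si: "S \<subseteq> {0..1}" unfolding S_def using All.IH sub by blast
  have Sn: "S \<noteq> {}" unfolding S_def using M unfolding is_structure_def by auto
  have "Inf S \<in> {0..1}"
  proof -
    obtain s where s: "s \<in> S" using Sn by auto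
    have b: "bdd_below S" using Si by (intro bdd_belowI[of _ 0]) auto
    have "Inf S \<le> s" using cInf_lower[OF s b] .
    moreover have "0 \<le> Inf S" using Si Sn by (intro cInf_greatest) auto
    ultimately show ?thesis using s Si by auto
  qed
  then show ?case unfolding S_def by simp
next
  case (Ex x \<phi>)
  define S where "S = {eval T M (v(x := a)) \<phi> | a. a \<in> mdom M}"
  have sub: "\<And>a. a \<in> mdom M \<Longrightarrow> range (v(x:=a)) \<subseteq> mdom M" using Ex.prems by auto
  have Si: "S \<subseteq> {0..1}" unfolding S_def using Ex.IH sub by blast
  have Sn: "S \<noteq> {}" unfolding S_def using M unfolding is_structure_def by auto
  have "Sup S \<in> {0..1}"
  proof -
    obtain s where s: "s \<in> S" using Sn by auto
    have b: "bdd_above S" using Si by (intro bdd_aboveI[of _ 1]) auto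
    have "s \<le> Sup S" using cSup_upper[OF s b] .
    moreover have "Sup S \<le> 1" using Si Sn by (intro cSup_least) auto
    ultimately show ?thesis using s Si by auto
  qed
  then show ?case unfolding S_def by simp
qed

fun pw :: "(real \<Rightarrow> real \<Rightarrow> real) \<Rightarrow> real \<Rightarrow> nat \<Rightarrow> real" where
  "pw T b 0 = 1"
| "pw T b (Suc n) = T b (pw T b n)"

lemma pw_range: "cont_tnorm T \<Longrightarrow> b \<in> {0..1} \<Longrightarrow> pw T b n \<in> {0..1}"
proof (induction n)
  case (Suc n) then show ?case using tn_range[of T b "pw T b n"] by simp
qed simp

lemma pw_add: assumes T: "cont_tnorm T" and b: "b \<in> {0..1}"
  shows "pw T b (m + n) = T (pw T b m) (pw T b n)"
proof (induction m)
  case 0 then show ?case using tn_unit1[OF T pw_range[OF T b]] by simp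
next
  case (Suc m) then show ?case using tn_assoc[OF T b pw_range[OF T b] pw_range[OF T b]] by simp
qed

lemma eval_fpow_Suc: assumes T: "cont_tnorm T" and b: "eval T M v \<beta> \<in> {0..1}"
  shows "eval T M v (fpow \<beta> (Suc n)) = pw T (eval T M v \<beta>) (Suc n)"
proof (induction n)
  case 0 then show ?case using tn_unit[OF T b] by simp
next
  case (Suc n) then show ?case by simp
qed

lemma eval_fpow: assumes T: "cont_tnorm T" and b: "eval T M v \<beta> \<in> {0..1}"
  shows "eval T M v (fpow \<beta> n) = pw T (eval T M v \<beta>) n"
proof (cases n)
  case 0 then show ?thesis using resid_one[OF T, of 0 0] by (simp add: Top_def)
next
  case (Suc m) then show ?thesis using eval_fpow_Suc[OF T b] by simp
qed

lemma key: assumes T: "cont_tnorm T" and a: "a \<in> {0..1}" and b: "b \<in> {0..1}"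
  and h: "\<And>n. a \<le> pw T b n"
  shows "a \<le> T a b"
proof -
  have pr: "\<And>n. pw T b n \<in> {0..1}" using pw_range[OF T b] .
  have dec: "decseq (pw T b)"
    unfolding decseq_Suc_iff using tn_le2[OF T b pr] by simp
  obtain c where c: "pw T b \<longlonglongrightarrow> c" "\<forall>i. c \<le> pw T b i"
    using decseq_convergent[OF dec, of 0] pr by auto
  have ac: "a \<le> c" using LIMSEQ_le_const[OF c(1)] h by auto
  have c0: "0 \<le> c" using LIMSEQ_le_const[OF c(1), of 0] pr by auto
  have cb: "c \<le> b" using c(2)[rule_format, of 1] tn_unit[OF T b] by simp
  have cI: "c \<in> {0..1}" using c0 cb b by auto
  have lim2: "(\<lambda>n. pw T b (2*n)) \<longlonglongrightarrow> c"
    using LIMSEQ_subseq_LIMSEQ[OF c(1), of "\<lambda>n. 2*n"] by (simp add: strict_mono_def o_def)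
  have pp: "(\<lambda>n. (pw T b n, pw T b n)) \<longlonglongrightarrow> (c, c)" using c(1) by (intro tendsto_Pair)
  have cont: "continuous_on ({0..1} \<times> {0..1}) (\<lambda>(x,y). T x y)" using T unfolding cont_tnorm_def by blast
  have "((\<lambda>(x,y). T x y) \<circ> (\<lambda>n. (pw T b n, pw T b n))) \<longlonglongrightarrow> (\<lambda>(x,y). T x y) (c, c)"
    using cont[unfolded continuous_on_sequentially, rule_format, of "(c,c)" "\<lambda>n. (pw T b n, pw T b n)"] pr cI pp
    by (auto simp: mem_Times_iff)
  then have "(\<lambda>n. T (pw T b n) (pw T b n)) \<longlonglongrightarrow> T c c" by (simp add: o_def)
  moreover have "\<And>n. T (pw T b n) (pw T b n) = pw T b (2*n)"
    using pw_add[OF T b] by (metis mult_2)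
  ultimately have "(\<lambda>n. pw T b (2*n)) \<longlonglongrightarrow> T c c" by simp
  then have cc: "T c c = c" using lim2 LIMSEQ_unique by blast
  have "T c 0 \<le> a" using tn_zero[OF T cI] a by simp
  moreover have "a \<le> T c 1" using tn_unit[OF T cI] ac by simp
  ultimately obtain d where d: "0 \<le> d" "d \<le> 1" "T c d = a"
    using IVT'[of "\<lambda>t. T c t" 0 a 1] tn_cont2[OF T cI] by auto
  have dI: "d \<in> {0..1}" using d by auto
  have "T a c = T (T c d) c" using d by simp
  also have "\<dots> = T c (T c d)" using tn_comm[OF T tn_range[OF T cI dI] cI] .
  also have "\<dots> = T (T c c) d" using tn_assoc[OF T cI cI dI] by simp
  also have "\<dots> = a" using cc d by simp
  finally have "T a c = a" .
  moreover have "T a c \<le> T a b" using tn_mono2[OF T a b cI cb] .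
  ultimately show ?thesis by simp
qed

theorem mainTheorem6:
  fixes \<phi> \<alpha> \<beta> :: form
  shows "entails TYPE('m) {Vee \<phi> (Imp \<alpha> (fpow \<beta> n)) | n. True} (Vee \<phi> (Imp \<alpha> (SConj \<alpha> \<beta>)))"
  unfolding entails_def
proof (intro allI impI)
  fix T and M :: "'m fstruct"
  assume H: "cont_tnorm T \<and> is_structure M \<and> (\<forall>\<gamma>\<in>{Vee \<phi> (Imp \<alpha> (fpow \<beta> n)) | n. True}. is_model T M \<gamma>)"
  then have T: "cont_tnorm T" and M: "is_structure M" by auto
  have hyp: "\<And>n (v :: nat \<Rightarrow> 'm). range v \<subseteq> mdom M \<Longrightarrow> eval T M v (Vee \<phi> (Imp \<alpha> (fpow \<beta> n))) = 1"
    using H unfolding is_model_def by blast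
  show "is_model T M (Vee \<phi> (Imp \<alpha> (SConj \<alpha> \<beta>)))"
    unfolding is_model_def
  proof (intro allI impI)
    fix v :: "nat \<Rightarrow> 'm" assume v: "range v \<subseteq> mdom M"
    define f where "f = eval T M v \<phi>"
    define a where "a = eval T M v \<alpha>"
    define b where "b = eval T M v \<beta>"
    have f: "f \<in> {0..1}" unfolding f_def using eval_range[OF T M v] .
    have a: "a \<in> {0..1}" unfolding a_def using eval_range[OF T M v] .
    have b: "b \<in> {0..1}" unfolding b_def using eval_range[OF T M v] .
    have ab: "T a b \<in> {0..1}" using tn_range[OF T a b] .
    have fp: "\<And>n. eval T M v (fpow \<beta> n) = pw T b n" unfolding b_def using eval_fpow[OF T eval_range[OF T M v]] .
    have g: "\<And>n. residuum T a (pw T b n) \<in> {0..1}" using resid(2)[OF T a pw_range[OF T b] a] .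
    have "\<And>n. f = 1 \<or> residuum T a (pw T b n) = 1"
    proof -
      fix n
      have "eval T M v (Vee \<phi> (Imp \<alpha> (fpow \<beta> n))) = 1" using hyp v .
      then show "f = 1 \<or> residuum T a (pw T b n) = 1"
        using vee_one[OF T f g[of n]] fp[of n] unfolding Vee_def Wedge_def f_def a_def by simp
    qed
    then have "f = 1 \<or> residuum T a (T a b) = 1"
      using key[OF T a b] resid_one[OF T a pw_range[OF T b]] resid_one[OF T a ab] by metis
    then show "eval T M v (Vee \<phi> (Imp \<alpha> (SConj \<alpha> \<beta>))) = 1"
      using vee_one[OF T f resid(2)[OF T a ab a]] unfolding Vee_def Wedge_def f_def a_def b_def by simp
  qed
qed

end
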